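(* Consider the following two-bidder auction with limit price $L=0$. A single good has common value $v$ with CDF $F_v$, density $f_v$, support $\mathbb{R}_+$ and finite mean. Alice submits a bid knowing only $F_v$; then $v$ is realized and Bob, observing $v$ but not Alice's bid, submits a bid; the highest bid wins and pays its bid, receiving $v$ minus the bid; Bob wins ties. Let $\Pi_B$ be Bob's expected profit in the equilibrium in which Bob bids $\mathbb{E}[\tilde v\mid\tilde v<v]$ and Alice draws $v'\sim F_v$ independently and bids $\mathbb{E}[\tilde v\mid\tilde v<v']$. Then, with $v\sim F_v$, $$\Pi_B\ge \mathbb{E}[\max(v-\mathbb{E}[v],0)]\quad\text{and}\quad \Pi_B\ge \mathbb{E}[\max(\mathbb{E}[v]-v,0)].$$
   Context: Bidders are risk neutral; $\tilde v\sim F_v$. *)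

theory Defs
  imports "HOL-Probability.Probability"
begin

definition real_support :: "real measure \<Rightarrow> real set" where
  "real_support M = {x. \<forall>e>0. measure M (ball x e) > 0}"

text \<open>Conditional expectation E[v | v < w] under the distribution M
  (value 0 if the conditioning event has probability 0, which happens only
  on a null set of w when the support is the nonnegative reals).\<close>
definition cond_exp_below :: "real measure \<Rightarrow> real \<Rightarrow> real" where
  "cond_exp_below M w =
     (\<integral>x. x * indicator {..<w} x \<partial>M) / measure M {..<w}"

text \<open>Bob's expected profit in the equilibrium: Bob (value v) bids
  b v = E[v~ | v~ < v]; Alice draws v' independently from the same
  distribution and bids b v'; Bob wins ties and pays his bid.\<close>
definition bob_profit :: "real measure \<Rightarrow> real" where
  "bob_profit M =
     (\<integral>p. (if cond_exp_below M (snd p) \<le> cond_exp_below M (fst p)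
            then fst p - cond_exp_below M (fst p) else 0) \<partial>(M \<Otimes>\<^sub>M M))"

end

theory Submission
  imports Defs
begin

theorem corollary2:
  fixes f :: "real \<Rightarrow> real"
  defines "M \<equiv> density lborel f"
  assumes f_meas: "f \<in> borel_measurable borel"
    and f_nonneg: "\<And>x. f x \<ge> 0"
    and prob: "prob_space M"
    and supp: "real_support M = {0..}"
    and mean: "integrable M (\<lambda>x. x)"
  shows "bob_profit M \<ge> (\<integral>v. max (v - (\<integral>x. x \<partial>M)) 0 \<partial>M) \<and>
         bob_profit M \<ge> (\<integral>v. max ((\<integral>x. x \<partial>M) - v) 0 \<partial>M)"
proof -
  interpret P: prob_space M by (rule prob)
  interpret PP: pair_prob_space M M ..
  have sM[simp, measurable_cong]: "sets M = sets borel" unfolding M_def by simp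
  have spM[simp]: "space M = UNIV" unfolding M_def by simp
  have probU[simp]: "measure M UNIV = 1" using P.prob_space by simp
  have null0: "{0} \<in> null_sets M"
  proof -
    have "AE x in lborel. x \<in> {0::real} \<longrightarrow> ennreal (f x) = 0"
      using AE_lborel_singleton[of "0::real"] by eventually_elim auto
    then show ?thesis unfolding M_def using f_meas
      by (subst null_sets_density_iff) auto
  qed
  have nullneg: "{..<0} \<in> null_sets M"
  proof -
    define FF where "FF = {ball x e | x e. e > (0::real) \<and> measure M (ball x e) = 0}"
    have "\<And>S. S \<in> FF \<Longrightarrow> open S" by (auto simp: FF_def)
    then obtain G where G: "G \<subseteq> FF" "countable G" "\<Union>G = \<Union>FF" by (rule Lindelof)
    have sub: "{..<0} \<subseteq> \<Union>FF"
    proof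
      fix x :: real assume "x \<in> {..<0}"
      then have "x \<notin> real_support M" using supp by auto
      then obtain e where "e>0" "\<not> measure M (ball x e) > 0" unfolding real_support_def by auto
      then have "measure M (ball x e) = 0" using measure_nonneg[of M "ball x e"] by linarith
      then show "x \<in> \<Union>FF" using \<open>e>0\<close> unfolding FF_def by force
    qed
    have "(\<Union>B\<in>G. B) \<in> null_sets M"
    proof (rule null_sets_UN')
      show "countable G" by fact
      fix B assume "B \<in> G"
      then obtain x e where "B = ball x e" "measure M (ball x e) = 0" using G(1) by (auto simp: FF_def)
      then show "B \<in> null_sets M" by (auto simp: null_sets_def P.emeasure_eq_measure)
    qed
    then show ?thesis using sub G(3) by (auto intro: null_sets_subset)
  qed
  have pos: "AE x in M. x > 0"
  proof -
    from AE_not_in[OF null0] AE_not_in[OF nullneg] show ?thesis by eventually_elim auto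
  qed

  define F where "F w = measure M {..<w}" for w :: real
  define I where "I w = (\<integral>x. x * indicator {..<w} x \<partial>M)" for w :: real
  define b where "b = cond_exp_below M"
  have b_eq: "b w = I w / F w" for w unfolding b_def cond_exp_below_def I_def F_def by simp
  have intI: "integrable M (\<lambda>x. x * indicator A x)" if "A \<in> sets borel" for A :: "real set"
    using that mean by (intro integrable_real_mult_indicator) auto
  have intC: "integrable M (\<lambda>x. c * indicator A x)" if "A \<in> sets borel" for A :: "real set" and c :: real
    using that by (intro integrable_real_mult_indicator) auto
  have intInd: "integrable M (indicator A :: real \<Rightarrow> real)" if "A \<in> sets borel" for A :: "real set"
    using that by (intro integrable_real_indicator) (auto simp: P.emeasure_eq_measure)
  have Fint: "(\<integral>x. c * indicator {..<w} x \<partial>M) = c * F w" for c w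
    unfolding F_def by simp
  have Fpos: "F w > 0" if "w > 0" for w
  proof -
    have "w/2 \<in> real_support M" using supp that by auto
    then have "0 < measure M (ball (w/2) (w/2))" using that unfolding real_support_def by auto
    also have "\<dots> \<le> F w" unfolding F_def
      by (rule P.finite_measure_mono) (auto simp: ball_def dist_real_def split: abs_split)
    finally show ?thesis .
  qed
  have Ile: "I w \<le> w * F w" for w
  proof -
    have "I w \<le> (\<integral>x. w * indicator {..<w} x \<partial>M)" unfolding I_def
      by (rule integral_mono) (auto intro!: intI intC intInd split: split_indicator)
    then show ?thesis unfolding F_def by simp
  qed
  have Inonneg: "I w \<ge> 0" for w
    unfolding I_def using pos by (intro integral_nonneg_AE) (auto split: split_indicator)
  have Idiff: "w1 * (F w2 - F w1) \<le> I w2 - I w1" if "w1 \<le> w2" for w1 w2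
  proof -
    have "w1 * (F w2 - F w1) = (\<integral>x. w1 * indicator {..<w2} x - w1 * indicator {..<w1} x \<partial>M)"
      by (subst Bochner_Integration.integral_diff) (auto intro!: intC intInd simp: F_def algebra_simps)
    also have "\<dots> \<le> (\<integral>x. x * indicator {..<w2} x - x * indicator {..<w1} x \<partial>M)"
      using that by (intro integral_mono) (auto intro!: intI intC intInd split: split_indicator)
    also have "\<dots> = I w2 - I w1" unfolding I_def
      by (subst Bochner_Integration.integral_diff) (auto intro!: intI)
    finally show ?thesis .
  qed
  have bmono: "b w1 \<le> b w2" if "0 < w1" "w1 \<le> w2" for w1 w2
  proof -
    have F1: "F w1 > 0" and F2: "F w2 > 0" using Fpos that by auto
    have Fm: "F w1 \<le> F w2" unfolding F_def using that
      by (intro P.finite_measure_mono) auto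
    have "I w1 * F w2 \<le> I w2 * F w1"
    proof -
      have "(w1 * F w1 - I w1) * (F w2 - F w1) \<ge> 0"
        using Ile[of w1] Fm by (intro mult_nonneg_nonneg) auto
      moreover have "F w1 * (w1 * (F w2 - F w1)) \<le> F w1 * (I w2 - I w1)"
        using Idiff[OF that(2)] F1 by (intro mult_left_mono) auto
      ultimately show ?thesis by (simp add: algebra_simps)
    qed
    then show ?thesis unfolding b_eq using F1 F2 by (simp add: field_simps)
  qed
  have bbound: "0 \<le> b w \<and> b w \<le> w" if "w > 0" for w
    using Fpos[OF that] Ile[of w] Inonneg[of w] unfolding b_eq
    by (auto simp: field_simps)
  have Fmeas[measurable]: "F \<in> borel_measurable borel"
    by (rule borel_measurable_mono) (auto simp: mono_def F_def intro!: P.finite_measure_mono)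
  have Ialt: "I = (\<lambda>w. \<integral>x. (if x < w then x else 0) \<partial>M)"
    unfolding I_def by (intro ext Bochner_Integration.integral_cong) (auto split: split_indicator)
  have Imeas[measurable]: "I \<in> borel_measurable borel"
    unfolding Ialt by measurable
  have bmeas[measurable]: "b \<in> borel_measurable borel"
    unfolding b_eq[abs_def] by measurable

  define \<mu> where "\<mu> = (\<integral>x. x \<partial>M)"
  define h where "h p = (if b (snd p) \<le> b (fst p) then fst p - b (fst p) else 0)" for p :: "real \<times> real"
  have bp: "bob_profit M = (\<integral>p. h p \<partial>(M \<Otimes>\<^sub>M M))"
    unfolding bob_profit_def h_def b_def by simp
  have hmeas[measurable]: "h \<in> borel_measurable (M \<Otimes>\<^sub>M M)"
    unfolding h_def[abs_def] by measurable
  have fstint: "integrable (M \<Otimes>\<^sub>M M) (\<lambda>p. fst p)"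
  proof -
    have "integrable (distr (M \<Otimes>\<^sub>M M) M fst) (\<lambda>x. x)"
      using mean P.distr_pair_fst[of M] by (simp add: P.sigma_finite_measure_axioms)
    then show ?thesis by (subst (asm) integrable_distr_eq) auto
  qed
  have AEpos2: "AE p in M \<Otimes>\<^sub>M M. fst p > 0 \<and> snd p > 0"
  proof (rule PP.AE_pair_measure)
    show "{x \<in> space (M \<Otimes>\<^sub>M M). 0 < fst x \<and> 0 < snd x} \<in> sets (M \<Otimes>\<^sub>M M)"
      by measurable
    show "AE x in M. AE y in M. 0 < fst (x, y) \<and> 0 < snd (x, y)"
      using pos by (rule eventually_mono) (use pos in \<open>auto elim: eventually_mono\<close>)
  qed
  have hint: "integrable (M \<Otimes>\<^sub>M M) h"
  proof (rule Bochner_Integration.integrable_bound[OF fstint])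
    show "h \<in> borel_measurable (M \<Otimes>\<^sub>M M)" by measurable
    show "AE p in M \<Otimes>\<^sub>M M. norm (h p) \<le> norm (fst p)"
      using AEpos2
    proof eventually_elim
      case (elim p)
      then show ?case using bbound[of "fst p"] by (auto simp: h_def)
    qed
  qed
  define G where "G x = measure M {y. b y \<le> b x}" for x
  have inner: "(\<integral>y. h (x,y) \<partial>M) = (x - b x) * G x" for x
  proof -
    have "(\<integral>y. h (x,y) \<partial>M) = (\<integral>y. (x - b x) * indicator {y. b y \<le> b x} y \<partial>M)"
      by (rule Bochner_Integration.integral_cong) (auto simp: h_def split: split_indicator)
    also have "\<dots> = (x - b x) * G x" by (simp add: G_def)
    finally show ?thesis .
  qed
  have step1: "bob_profit M = (\<integral>x. (x - b x) * G x \<partial>M)"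
    using PP.integral_fst'[OF hint] inner bp by simp
  have int1: "integrable M (\<lambda>x. (x - b x) * G x)"
    using PP.integrable_fst'[OF hint] inner by simp
  define k where "k x = x * F x - I x" for x
  have Fle1: "F x \<le> 1" for x unfolding F_def by simp
  have kint: "integrable M k"
  proof (rule Bochner_Integration.integrable_bound[OF mean])
    show "k \<in> borel_measurable M" unfolding k_def[abs_def] by measurable
    show "AE x in M. norm (k x) \<le> norm x"
      using pos
    proof eventually_elim
      case (elim x)
      have "x * F x \<le> x" using Fle1[of x] elim mult_left_mono[of "F x" 1 x] by simp
      then have "0 \<le> k x \<and> k x \<le> x" using Ile[of x] Inonneg[of x] unfolding k_def by linarith
      then show ?case using elim by auto
    qed
  qed
  have null_le0: "measure M {..0} = 0"
  proof -
    have "measure M ({..<0} \<union> {0}) \<le> measure M {..<0} + measure M {0}"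
      by (rule measure_Un_le) auto
    also have "\<dots> = 0" using null0 nullneg by (simp add: P.emeasure_eq_measure null_sets_def)
    finally show ?thesis
      by (metis ivl_disj_un_singleton(2) measure_nonneg order_antisym)
  qed
  have step2: "(\<integral>x. k x \<partial>M) \<le> (\<integral>x. (x - b x) * G x \<partial>M)"
  proof (rule integral_mono_AE[OF kint int1])
    show "AE x in M. k x \<le> (x - b x) * G x"
      using pos
    proof eventually_elim
      case (elim x)
      have FG: "F x \<le> G x"
      proof -
        have "F x \<le> measure M ({y. b y \<le> b x} \<union> {..0})" unfolding F_def
          by (rule P.finite_measure_mono) (use bmono elim in \<open>auto simp: not_le\<close>)
        also have "\<dots> \<le> G x + measure M {..0}" unfolding G_def
          by (rule measure_Un_le) auto
        finally show ?thesis using null_le0 by simp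
      qed
      have kx: "k x = (x - b x) * F x" using Fpos[OF elim] unfolding k_def b_eq
        by (simp add: field_simps)
      show ?case unfolding kx using FG bbound[OF elim] by (intro mult_left_mono) auto
    qed
  qed
  have step3: "(\<integral>x. max (x - \<mu>) 0 \<partial>M) \<le> (\<integral>x. k x \<partial>M)"
  proof (rule integral_mono[OF _ kint])
    show "integrable M (\<lambda>x. max (x - \<mu>) 0)"
      using mean by (intro Bochner_Integration.integrable_max Bochner_Integration.integrable_diff) auto
    fix x :: real
    have kx: "k x = (\<integral>y. (x - y) * indicator {..<x} y \<partial>M)"
    proof -
      have "(\<integral>y. (x - y) * indicator {..<x} y \<partial>M) =
            (\<integral>y. x * indicator {..<x} y - y * indicator {..<x} y \<partial>M)"
        by (rule Bochner_Integration.integral_cong) (auto simp: algebra_simps)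
      also have "\<dots> = x * F x - I x"
        by (subst Bochner_Integration.integral_diff) (auto intro!: intC intI intInd simp: F_def I_def)
      finally show ?thesis unfolding k_def by simp
    qed
    have intxy: "integrable M (\<lambda>y. (x - y) * indicator {..<x} y)"
    proof -
      have "integrable M (\<lambda>y. x * indicator {..<x} y - y * indicator {..<x} y)"
        by (intro Bochner_Integration.integrable_diff intC intI) auto
      then show ?thesis by (simp add: left_diff_distrib)
    qed
    have "x - \<mu> = (\<integral>y. x - y \<partial>M)"
      unfolding \<mu>_def using mean by (subst Bochner_Integration.integral_diff) auto
    also have "\<dots> \<le> (\<integral>y. (x - y) * indicator {..<x} y \<partial>M)"
      using mean intxy by (intro integral_mono) (auto split: split_indicator)
    finally have a: "x - \<mu> \<le> k x" using kx by simp
    have "0 \<le> k x" unfolding kx by (intro Bochner_Integration.integral_nonneg) (auto split: split_indicator)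
    then show "max (x - \<mu>) 0 \<le> k x" using a by simp
  qed
  have step4: "(\<integral>v. max (\<mu> - v) 0 \<partial>M) = (\<integral>v. max (v - \<mu>) 0 \<partial>M)"
  proof -
    have "(\<integral>v. max (\<mu> - v) 0 \<partial>M) = (\<integral>v. max (v - \<mu>) 0 - (v - \<mu>) \<partial>M)"
      by (rule Bochner_Integration.integral_cong) auto
    also have "\<dots> = (\<integral>v. max (v - \<mu>) 0 \<partial>M) - (\<integral>v. v - \<mu> \<partial>M)"
      using mean by (subst Bochner_Integration.integral_diff)
        (auto intro!: Bochner_Integration.integrable_max Bochner_Integration.integrable_diff)
    also have "(\<integral>v. v - \<mu> \<partial>M) = 0"
      unfolding \<mu>_def using mean by (subst Bochner_Integration.integral_diff) auto
    finally show ?thesis by simp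
  qed
  show ?thesis
    using step1 step2 step3 step4 unfolding \<mu>_def[symmetric] by linarith

qed

end
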